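(* Let $R$ be any ring and let $x,y\in R$ satisfy $x^2=0$, $y^2=0$, $x\neq 0$, $y\neq 0$. If $x\circ y=x+y-xy$ is nilpotent, then $xy$ is nilpotent.
   Context: Rings are associative and not necessarily unital. *)

theory Defs
  imports Main
begin

text \<open>Positive powers in a possibly non-unital ring (multiplicative semigroup):
  pos_pow x n = x^(n+1).\<close>
fun pos_pow :: "'a::semigroup_mult \<Rightarrow> nat \<Rightarrow> 'a" where
  "pos_pow x 0 = x"
| "pos_pow x (Suc n) = x * pos_pow x n"

definition nilpotent_elem :: "'a::{semigroup_mult,zero} \<Rightarrow> bool" where
  "nilpotent_elem x \<longleftrightarrow> (\<exists>n. pos_pow x n = 0)"

end

theory Submission
  imports Defs
begin

lemma pp_Suc': "pos_pow (x::'a::semigroup_mult) (Suc n) = pos_pow x n * x"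
  proof (induction n)
  case 0 then show ?case by simp
next
  case (Suc n)
  have "pos_pow x (Suc (Suc n)) = x * (pos_pow x n * x)" using Suc by simp
  also have "\<dots> = pos_pow x (Suc n) * x" by (simp add: mult.assoc)
  finally show ?case .
qed

lemma pp_add: "pos_pow (x::'a::semigroup_mult) (Suc (m + n)) = pos_pow x m * pos_pow x n"
  by (induction m) (simp_all add: mult.assoc)

lemma pp_zero_mono:
  assumes "pos_pow (z::'a::ring) n = 0" "n \<le> m"
  shows "pos_pow z m = 0"
  using assms(2)
proof (induction m)
  case 0 then show ?case using assms(1) by simp
next
  case (Suc m)
  then show ?case using assms(1) by (cases "n = Suc m") auto
qed

theorem lemma2p2:
  fixes x y :: "'a::ring"
  assumes "x * x = 0" and "y * y = 0" and "x \<noteq> 0" and "y \<noteq> 0"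
    and "nilpotent_elem (x + y - x * y)"
  shows "nilpotent_elem (x * y)"
proof -
  define z where "z = x + y - x * y"
  define w where "w = x * y"
  define R where "R k = x * pos_pow z k * y" for k
  obtain n where n: "pos_pow z n = 0" using assms(5) unfolding nilpotent_elem_def z_def by blast
  have zy: "z * y = w" unfolding z_def w_def using assms(1,2)
    by (simp add: algebra_simps mult.assoc)
  have zx: "z * x = y * x - x * y * x" unfolding z_def using assms(1,2)
    by (simp add: algebra_simps mult.assoc)
  have xz: "x * z = w" unfolding z_def w_def using assms(1,2)
    by (simp add: algebra_simps flip: mult.assoc)
  have R1: "R 1 = w * w"
  proof -
    have "R 1 = (x * z) * (z * y)" unfolding R_def by (simp add: mult.assoc)
    thus ?thesis using xz zy by simp
  qed
  have Rrec: "R (Suc (Suc k)) = (R k - R (Suc k)) * w" for k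
  proof -
    have "R (Suc (Suc k)) = x * pos_pow z k * (z * x) * y"
    proof -
      have "pos_pow z (Suc (Suc k)) = pos_pow z k * z * z"
        by (simp only: pp_Suc')
      hence "R (Suc (Suc k)) = x * pos_pow z k * z * (z * y)" unfolding R_def by (simp add: mult.assoc)
      thus ?thesis using zy unfolding w_def by (simp add: mult.assoc)
    qed
    also have "\<dots> = (R k - R (Suc k)) * w"
    proof -
      have "R (Suc k) = x * pos_pow z k * (z * y)" unfolding R_def by (simp only: pp_Suc' mult.assoc)
      hence r1: "R (Suc k) = x * pos_pow z k * x * y" using zy unfolding w_def by (simp add: mult.assoc)
      show ?thesis unfolding zx r1 unfolding R_def w_def
        by (simp add: algebra_simps mult.assoc)
    qed
    finally show ?thesis .
  qed
  have Rz: "R m = 0" if "n \<le> m" for m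
    unfolding R_def using pp_zero_mono[OF n that] by simp
  have D: "\<forall>k. k + d = n \<longrightarrow> R k * pos_pow w d = 0 \<and> R (Suc k) * pos_pow w d = 0" for d
  proof (induction d)
    case 0 then show ?case using Rz by simp
  next
    case (Suc d)
    show ?case
    proof (intro allI impI)
      fix k assume k: "k + Suc d = n"
      from Suc[rule_format, of "Suc k"] k
      have a: "R (Suc k) * pos_pow w d = 0" and b: "R (Suc (Suc k)) * pos_pow w d = 0" by auto
      have c: "R (Suc k) * pos_pow w (Suc d) = 0"
        by (simp only: pp_Suc' a mult.assoc[symmetric] mult_zero_left)
      have "R k * pos_pow w (Suc d) = (R k * w) * pos_pow w d" by (simp add: mult.assoc)
      also have "R k * w = R (Suc (Suc k)) + R (Suc k) * w" using Rrec[of k] by (simp add: algebra_simps)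
      also have "(R (Suc (Suc k)) + R (Suc k) * w) * pos_pow w d = 0"
        proof -
        have "R (Suc k) * w * pos_pow w d = 0" using c by (simp add: mult.assoc)
        thus ?thesis using b by (simp add: distrib_right)
      qed
      finally show "R k * pos_pow w (Suc d) = 0 \<and> R (Suc k) * pos_pow w (Suc d) = 0" using c by simp
    qed
  qed
  have "R 1 * pos_pow w n = 0" using D[of n] by simp
  hence "pos_pow w (Suc (Suc n)) = 0" using R1 by (simp add: mult.assoc)
  thus ?thesis unfolding nilpotent_elem_def w_def by blast
qed

end
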